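(* Let $m<n$, let $\mathbf{p}=(p_1,\ldots,p_n)$ be a probability vector with $p_1\geq\cdots\geq p_n\geq 0$, and let $\mathbf{q}=(q_1,\ldots,q_m)$ be a probability vector with $q_1\geq\cdots\geq q_m\geq 0$. If $\mathbf{p}\preceq\mathbf{q}$, then $R_m(\mathbf{p})\preceq\mathbf{q}$.
   Context: Majorization: for probability vectors $\mathbf{a},\mathbf{b}$, each sorted in nonincreasing order, with the shorter one padded with zeros to equal length, $\mathbf{a}\preceq\mathbf{b}$ means $\sum_{k=1}^i a_k\leq\sum_{k=1}^i b_k$ for all $i$. Definition of $R_m(\mathbf{p})=(r_1,\ldots,r_m)$: if $p_1<1/m$, then $R_m(\mathbf{p})=(1/m,\ldots,1/m)$. If $p_1\geq 1/m$, let $i^*$ be the maximum index $i\in\{1,\ldots,m-1\}$ with $p_i\geq \frac{\sum_{j=i+1}^n p_j}{m-i}$. Then $r_i=p_i$ for $i\leq i^*$ and $r_i=\frac{\sum_{j=i^*+1}^n p_j}{m-i^*}$ for $i=i^*+1,\ldots,m$. *)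

theory Defs
  imports Complex_Main
begin

(* Vectors are functions nat => real, with the entries of a vector of length n
   stored at indices 1..n. *)

definition prob_vec :: "nat \<Rightarrow> (nat \<Rightarrow> real) \<Rightarrow> bool" where
  "prob_vec n p \<longleftrightarrow> (\<forall>i\<in>{1..n}. 0 \<le> p i) \<and> (\<Sum>i=1..n. p i) = 1"

definition nonincr :: "nat \<Rightarrow> (nat \<Rightarrow> real) \<Rightarrow> bool" where
  "nonincr n p \<longleftrightarrow> (\<forall>i j. 1 \<le> i \<longrightarrow> i \<le> j \<longrightarrow> j \<le> n \<longrightarrow> p j \<le> p i)"

definition pad :: "nat \<Rightarrow> (nat \<Rightarrow> real) \<Rightarrow> nat \<Rightarrow> real" where
  "pad n a k = (if 1 \<le> k \<and> k \<le> n then a k else 0)"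

definition majorized :: "nat \<Rightarrow> (nat \<Rightarrow> real) \<Rightarrow> nat \<Rightarrow> (nat \<Rightarrow> real) \<Rightarrow> bool" where
  "majorized n a m b \<longleftrightarrow>
     (\<forall>i\<in>{1..max n m}. (\<Sum>k=1..i. pad n a k) \<le> (\<Sum>k=1..i. pad m b k))"

(* the index i^* ; the set is empty only when m = 1, in which case we take i^* = 0 *)
definition istar :: "nat \<Rightarrow> nat \<Rightarrow> (nat \<Rightarrow> real) \<Rightarrow> nat" where
  "istar m n p = (let S = {i\<in>{1..m-1}. p i \<ge> (\<Sum>j=i+1..n. p j) / real (m - i)}
                  in if S = {} then 0 else Max S)"

definition R :: "nat \<Rightarrow> nat \<Rightarrow> (nat \<Rightarrow> real) \<Rightarrow> nat \<Rightarrow> real" where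
  "R m n p i =
     (if p 1 < 1 / real m then 1 / real m
      else if i \<le> istar m n p then p i
      else (\<Sum>j=istar m n p + 1..n. p j) / real (m - istar m n p))"

end

theory Submission
  imports Defs
begin

lemma split1: "a \<le> b \<Longrightarrow> sum (f::nat\<Rightarrow>real) {1..b} = sum f {1..a} + sum f {a+1..b}"
proof -
  assume "a \<le> b"
  then obtain d where "b = a + d" using le_Suc_ex by blast
  then show ?thesis using sum.ub_add_nat[of 1 a f d] by simp
qed

lemma conc:
  assumes "nonincr m q" "a \<le> i" "i \<le> m"
  shows "real (m-a) * (sum q {1..i} - sum q {1..a}) \<ge> real (i-a) * (sum q {1..m} - sum q {1..a})"
proof (cases "a = i")
  case True then show ?thesis by simp
next
  case False
  hence ai: "a < i" using assms by simp
  have s1: "sum q {1..i} - sum q {1..a} = sum q {a+1..i}" using split1[of a i q] assms by simp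
  have s2: "sum q {1..m} - sum q {1..i} = sum q {i+1..m}" using split1[of i m q] assms by simp
  have l1: "sum q {a+1..i} \<ge> real (i-a) * q i"
  proof -
    have "sum q {a+1..i} \<ge> sum (\<lambda>_. q i) {a+1..i}"
      by (rule sum_mono) (use assms ai in \<open>auto simp: nonincr_def\<close>)
    thus ?thesis by simp
  qed
  have l2: "sum q {i+1..m} \<le> real (m-i) * q i"
  proof -
    have "sum q {i+1..m} \<le> sum (\<lambda>_. q i) {i+1..m}"
      by (rule sum_mono) (use assms ai in \<open>auto simp: nonincr_def\<close>)
    thus ?thesis by simp
  qed
  define A where "A = sum q {a+1..i}"
  define B where "B = sum q {i+1..m}"
  have e1: "sum q {1..i} - sum q {1..a} = A" using s1 A_def by simp
  have e2: "sum q {1..m} - sum q {1..a} = A + B" using s1 s2 A_def B_def by linarith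
  have c1: "real (m-a) = real (m-i) + real (i-a)" using assms by simp
  have "real (m-i) * A \<ge> real (m-i) * (real (i-a) * q i)"
    using l1 A_def by (intro mult_left_mono) auto
  moreover have "real (i-a) * B \<le> real (i-a) * (real (m-i) * q i)"
    using l2 B_def by (intro mult_left_mono) auto
  ultimately have "real (i-a) * B \<le> real (m-i) * A" by (simp add: algebra_simps)
  thus ?thesis unfolding e1 e2 c1 by (simp add: algebra_simps)
qed

lemma padsum: "i \<le> n \<Longrightarrow> (\<Sum>k=1..i. pad n f k) = (\<Sum>k=1..i. f k)"
  by (rule sum.cong) (auto simp: pad_def)

theorem lemma4:
  fixes m n :: nat and p q :: "nat \<Rightarrow> real"
  assumes "1 \<le> m" and "m < n"
    and "prob_vec n p" and "nonincr n p"
    and "prob_vec m q" and "nonincr m q"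
    and "majorized n p m q"
  shows "majorized m (R m n p) m q"
proof -
  have Qm: "sum q {1..m} = 1" using assms(5) by (simp add: prob_vec_def)
  have Pn: "sum p {1..n} = 1" using assms(3) by (simp add: prob_vec_def)
  have maj: "sum p {1..i} \<le> sum q {1..i}" if "1 \<le> i" "i \<le> m" for i
  proof -
    have "max n m = n" using assms by simp
    then have "(\<Sum>k=1..i. pad n p k) \<le> (\<Sum>k=1..i. pad m q k)"
      using assms(7) that assms(2) unfolding majorized_def by auto
    thus ?thesis using padsum[of i n p] padsum[of i m q] that assms(2) by simp
  qed
  have goal: "(\<Sum>k=1..i. R m n p k) \<le> sum q {1..i}" if i: "1 \<le> i" "i \<le> m" for i
  proof (cases "p 1 < 1 / real m")
    case True
    have "(\<Sum>k=1..i. R m n p k) = real i * (1 / real m)"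
      using True by (simp add: R_def)
    also have "\<dots> \<le> sum q {1..i}"
    proof -
      have "real (m-0) * (sum q {1..i} - sum q {1..0}) \<ge> real (i-0) * (sum q {1..m} - sum q {1..0})"
        using conc[of m q 0 i] assms(6) i by simp
      then have "real m * sum q {1..i} \<ge> real i" using Qm by simp
      then show ?thesis using assms(1) by (simp add: field_simps)
    qed
    finally show ?thesis .
  next
    case False
    define a where "a = istar m n p"
    have am: "a \<le> m - 1"
    proof (cases "{i\<in>{1..m-1}. p i \<ge> (\<Sum>j=i+1..n. p j) / real (m - i)} = {}")
      case True then show ?thesis by (simp add: a_def istar_def Let_def)
    next
      case F: False
      have "Max {i\<in>{1..m-1}. p i \<ge> (\<Sum>j=i+1..n. p j) / real (m - i)}
            \<in> {i\<in>{1..m-1}. p i \<ge> (\<Sum>j=i+1..n. p j) / real (m - i)}"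
        by (rule Max_in) (use F in auto)
      then show ?thesis using F by (simp add: a_def istar_def Let_def)
    qed
    hence am': "a < m" using assms(1) by simp
    define c where "c = (\<Sum>j=a + 1..n. p j) / real (m - a)"
    have Rk: "R m n p k = (if k \<le> a then p k else c)" for k
      using False by (simp add: R_def a_def c_def)
    have PQa: "sum p {1..a} \<le> sum q {1..a}"
    proof (cases "a = 0")
      case True then show ?thesis by simp
    next
      case False then show ?thesis using maj[of a] am' by simp
    qed
    have tail: "(\<Sum>j=a + 1..n. p j) = 1 - sum p {1..a}"
      using split1[of a n p] Pn am' assms(2) by simp
    show ?thesis
    proof (cases "i \<le> a")
      case True
      have "(\<Sum>k=1..i. R m n p k) = sum p {1..i}"
        by (rule sum.cong) (use True in \<open>auto simp: Rk\<close>)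
      then show ?thesis using maj[OF i] by simp
    next
      case ia: False
      have "(\<Sum>k=1..i. R m n p k) = (\<Sum>k=1..a. R m n p k) + (\<Sum>k=a+1..i. R m n p k)"
        using split1[of a i] ia by simp
      also have "(\<Sum>k=1..a. R m n p k) = sum p {1..a}"
        by (rule sum.cong) (auto simp: Rk)
      also have "(\<Sum>k=a+1..i. R m n p k) = real (i - a) * c"
        by (simp add: Rk)
      finally have S: "(\<Sum>k=1..i. R m n p k) = sum p {1..a} + real (i - a) * c" .
      have C: "real (m-a) * (sum q {1..i} - sum q {1..a}) \<ge> real (i-a) * (1 - sum q {1..a})"
        using conc[of m q a i] assms(6) i ia Qm by simp
      define Pa where "Pa = sum p {1..a}"
      define Qa where "Qa = sum q {1..a}"
      define Qi where "Qi = sum q {1..i}"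
      define x where "x = real (m-a)"
      define y where "y = real (i-a)"
      have xpos: "x > 0" using am' x_def by simp
      have cx: "c * x = 1 - Pa" using tail xpos unfolding c_def Pa_def x_def by simp
      have yx: "y \<le> x" using i x_def y_def by simp
      have C': "x * (Qi - Qa) \<ge> y * (1 - Qa)" using C x_def y_def Qi_def Qa_def by simp
      have pq: "Pa \<le> Qa" using PQa Pa_def Qa_def by simp
      have "(x - y) * (Qa - Pa) \<ge> 0" using yx pq by simp
      have "x * (Pa + y * c) = x * Pa + y * (c * x)" by (simp add: algebra_simps)
      also have "\<dots> = x * Pa + y * (1 - Pa)" using cx by simp
      finally have "x * (Pa + y * c) \<le> x * Qi" using C' \<open>(x - y) * (Qa - Pa) \<ge> 0\<close>
        by (simp add: algebra_simps)
      hence "Pa + y * c \<le> Qi" using xpos by simp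
      then show ?thesis using S Pa_def y_def Qi_def by simp
    qed
  qed
  show ?thesis unfolding majorized_def
    using goal padsum[of _ m "R m n p"] padsum[of _ m q] by auto
qed

end
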